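(* Let $Q(t)$, $t\ge0$, be the queue-length process of an $M/M/1$ queue with arrival rate $\tilde\lambda>0$ and service rate $\mu>\tilde\lambda$, let $\rho=\tilde\lambda/\mu$, and let $R=\min\{t\ge0:Q(t)=0\}$. Then for every $n\in\mathbb N$ and $b>0$, $$\mathbb P\bigl(R>nb\mid Q(0)=n\bigr)\le\rho^{-n/2}\exp\Bigl(-nb\bigl(\tilde\lambda+\mu-\sqrt{b^{-2}+4\tilde\lambda\mu}\bigr)\Bigr).$$ *)

theory Defs
  imports "HOL-Probability.Probability"
begin

(* M/M/1 queue constructed by uniformisation: jumps occur at the arrival times of a
   Poisson process of rate lam+mu (i.i.d. Exp(lam+mu) inter-jump times E i);
   the k-th jump is an arrival (S k = True, prob lam/(lam+mu)) or a potential
   service completion (S k = False), which decreases the queue if it is positive. *)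

fun mm1_chain :: "nat \<Rightarrow> (nat \<Rightarrow> 'a \<Rightarrow> bool) \<Rightarrow> nat \<Rightarrow> 'a \<Rightarrow> nat" where
  "mm1_chain n S 0 \<omega> = n"
| "mm1_chain n S (Suc k) \<omega> = (if S k \<omega> then Suc (mm1_chain n S k \<omega>) else mm1_chain n S k \<omega> - 1)"

definition mm1_jump_time :: "(nat \<Rightarrow> 'a \<Rightarrow> real) \<Rightarrow> nat \<Rightarrow> 'a \<Rightarrow> real" where
  "mm1_jump_time E k \<omega> = (\<Sum>i<k. E i \<omega>)"

definition mm1_queue :: "nat \<Rightarrow> (nat \<Rightarrow> 'a \<Rightarrow> bool) \<Rightarrow> (nat \<Rightarrow> 'a \<Rightarrow> real) \<Rightarrow> real \<Rightarrow> 'a \<Rightarrow> nat" where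
  "mm1_queue n S E t \<omega> = mm1_chain n S (card {k. 0 < k \<and> mm1_jump_time E k \<omega> \<le> t}) \<omega>"

(* R = min {t >= 0. Q(t) = 0}, valued in ereal (infinity if never empty) *)
definition mm1_R :: "nat \<Rightarrow> (nat \<Rightarrow> 'a \<Rightarrow> bool) \<Rightarrow> (nat \<Rightarrow> 'a \<Rightarrow> real) \<Rightarrow> 'a \<Rightarrow> ereal" where
  "mm1_R n S E \<omega> = Inf {ereal t | t. 0 \<le> t \<and> mm1_queue n S E t \<omega> = 0}"

end

theory Submission
  imports Defs
begin


lemma chain_pow:
  fixes z :: real
  assumes "z \<noteq> 0" "\<forall>j\<le>k. mm1_chain n S j \<omega> \<noteq> 0"
  shows "z ^ mm1_chain n S k \<omega> = z ^ n * (\<Prod>i<k. if S i \<omega> then z else 1 / z)"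
  using assms(2)
proof (induction k)
  case 0 then show ?case by simp
next
  case (Suc k)
  have IH: "z ^ mm1_chain n S k \<omega> = z ^ n * (\<Prod>i<k. if S i \<omega> then z else 1 / z)"
    using Suc by auto
  have nz: "mm1_chain n S k \<omega> \<noteq> 0" using Suc.prems by auto
  then obtain m where m: "mm1_chain n S k \<omega> = Suc m" by (cases "mm1_chain n S k \<omega>") auto
  show ?case
  proof (cases "S k \<omega>")
    case True
    then show ?thesis using IH by (simp add: m mult.assoc mult.commute mult.left_commute)
  next
    case False
    have "z ^ mm1_chain n S (Suc k) \<omega> = z ^ m" using False m by simp
    also have "\<dots> = z ^ Suc m * (1 / z)" using assms(1) by simp
    also have "\<dots> = z ^ n * (\<Prod>i<k. if S i \<omega> then z else 1 / z) * (1 / z)"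
      using IH m by simp
    finally show ?thesis using False by (simp add: mult.assoc)
  qed
qed

lemma jump_time_strict_mono:
  assumes "\<forall>i. E i \<omega> > 0"
  shows "strict_mono (\<lambda>k. mm1_jump_time E k \<omega>)"
  using assms by (intro strict_monoI_Suc) (simp add: mm1_jump_time_def)

lemma jump_time_nonneg:
  assumes "\<forall>i. E i \<omega> > 0"
  shows "0 \<le> mm1_jump_time E k \<omega>"
  using assms unfolding mm1_jump_time_def by (intro sum_nonneg) (auto intro: less_imp_le)

lemma queue_at_jump:
  assumes "\<forall>i. E i \<omega> > 0"
  shows "mm1_queue n S E (mm1_jump_time E j \<omega>) \<omega> = mm1_chain n S j \<omega>"
proof -
  have sm: "strict_mono (\<lambda>k. mm1_jump_time E k \<omega>)" by (rule jump_time_strict_mono[of E \<omega>, OF assms])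
  have "{k. 0 < k \<and> mm1_jump_time E k \<omega> \<le> mm1_jump_time E j \<omega>} = {1..j}"
    using strict_mono_less_eq[OF sm] by auto
  then show ?thesis unfolding mm1_queue_def by simp
qed

lemma alive:
  assumes pos: "\<forall>i. E i \<omega> > 0" and Tk: "mm1_jump_time E k \<omega> \<le> t"
    and R: "mm1_R n S E \<omega> > ereal t"
  shows "\<forall>j\<le>k. mm1_chain n S j \<omega> \<noteq> 0"
proof (intro allI impI notI)
  fix j assume j: "j \<le> k" and c: "mm1_chain n S j \<omega> = 0"
  have sm: "strict_mono (\<lambda>k. mm1_jump_time E k \<omega>)" by (rule jump_time_strict_mono[of E \<omega>, OF pos])
  have "mm1_jump_time E j \<omega> \<le> mm1_jump_time E k \<omega>" using strict_mono_less_eq[OF sm] j by simp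
  with Tk have le: "mm1_jump_time E j \<omega> \<le> t" by simp
  have "ereal (mm1_jump_time E j \<omega>) \<in> {ereal t | t. 0 \<le> t \<and> mm1_queue n S E t \<omega> = 0}"
    using queue_at_jump[of E \<omega> n S j, OF pos] c jump_time_nonneg[of E \<omega>, OF pos]
    by (intro CollectI exI[where x="mm1_jump_time E j \<omega>"]) simp
  then have "mm1_R n S E \<omega> \<le> ereal (mm1_jump_time E j \<omega>)"
    unfolding mm1_R_def by (rule Inf_lower)
  moreover have "ereal (mm1_jump_time E j \<omega>) \<le> ereal t" using le by simp
  ultimately show False using R by (meson leD order_trans)
qed



lemma jump_time_meas[measurable]:
  assumes [measurable]: "\<And>i. E i \<in> borel_measurable N"
  shows "(\<lambda>\<omega>. mm1_jump_time E k \<omega>) \<in> borel_measurable N"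
  unfolding mm1_jump_time_def by measurable

lemma sigma_gen_measurable:
  assumes "\<And>i. X i \<in> measurable M N"
  shows "X i \<in> measurable (sigma (space M) (\<Union>i. {X i -` A \<inter> space M | A. A \<in> sets N})) N"
proof -
  let ?G = "(\<Union>i. {X i -` A \<inter> space M | A. A \<in> sets N})"
  have G: "?G \<subseteq> Pow (space M)" by auto
  show ?thesis
  proof (rule measurableI)
    fix x assume "x \<in> space (sigma (space M) ?G)"
    then have "x \<in> space M" using space_measure_of[OF G] by simp
    then show "X i x \<in> space N" using assms[of i] by (auto simp: measurable_def)
  next
    fix A assume "A \<in> sets N"
    then have "X i -` A \<inter> space M \<in> ?G" by blast
    then show "X i -` A \<inter> space (sigma (space M) ?G) \<in> sets (sigma (space M) ?G)"
      using space_measure_of[OF G] sets_measure_of[OF G] by (auto intro: sigma_sets.Basic)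
  qed
qed

lemma sigma_gen_sub:
  assumes "Y \<in> measurable (sigma (space M) G) N" "G \<subseteq> Pow (space M)"
  shows "{Y -` A \<inter> space M | A. A \<in> sets N} \<subseteq> sigma_sets (space M) G"
  using assms measurable_sets[OF assms(1)] space_measure_of[OF assms(2)] sets_measure_of[OF assms(2)]
  by auto



theorem lemmaC1:
  fixes M :: "'a measure" and lam mu b :: real and n :: nat
    and S :: "nat \<Rightarrow> 'a \<Rightarrow> bool" and E :: "nat \<Rightarrow> 'a \<Rightarrow> real"
  assumes "prob_space M" and "0 < lam" and "lam < mu" and "0 < b"
    and "\<And>i. S i \<in> measurable M (count_space UNIV)"
    and "\<And>i. prob_space.prob M {\<omega> \<in> space M. S i \<omega>} = lam / (lam + mu)"
    and "\<And>i. distributed M lborel (E i) (exponential_density (lam + mu))"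
    and "prob_space.indep_vars M (\<lambda>_. count_space UNIV) S UNIV"
    and "prob_space.indep_vars M (\<lambda>_. borel) E UNIV"
    and "prob_space.indep_set M
           (sigma_sets (space M) (\<Union>i. {S i -` A \<inter> space M | A. A \<in> sets (count_space UNIV)}))
           (sigma_sets (space M) (\<Union>i. {E i -` A \<inter> space M | A. A \<in> sets borel}))"
  shows "prob_space.prob M {\<omega> \<in> space M. mm1_R n S E \<omega> > ereal (real n * b)}
         \<le> (lam / mu) powr (- real n / 2)
            * exp (- (real n * b) * (lam + mu - sqrt (1 / b\<^sup>2 + 4 * lam * mu)))"
proof -
  interpret prob_space M by fact
  note lam = \<open>0 < lam\<close> and lmu = \<open>lam < mu\<close> and b = \<open>0 < b\<close>
  note Smeas[measurable] = assms(5)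
  note Sprob = assms(6) and Edist = assms(7) and Sind = assms(8) and Eind = assms(9)
  note indSE = assms(10)
  have Emeas[measurable]: "E i \<in> borel_measurable M" for i
    using Eind unfolding indep_vars_def2 by auto
  define \<nu> where "\<nu> = lam + mu"
  have nu: "0 < \<nu>" using lam lmu by (simp add: \<nu>_def)
  define t where "t = real n * b"
  have t: "0 \<le> t" using b by (simp add: t_def)
  define z where "z = sqrt mu / sqrt lam"
  have z1: "1 \<le> z" using lam lmu by (simp add: z_def)
  define c where "c = 2 * sqrt lam * sqrt mu / \<nu>"
  have c0: "0 \<le> c" using lam lmu nu by (simp add: c_def)
  define T where "T k \<omega> = mm1_jump_time E k \<omega>" for k \<omega>
  have Tmeas[measurable]: "T k \<in> borel_measurable M" for k
    unfolding T_def by measurable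
  define XS where "XS k \<omega> = z ^ n * (\<Prod>i<k. if S i \<omega> then z else 1 / z)" for k \<omega>
  define XE where "XE k \<omega> = (if T k \<omega> \<le> t \<and> t < T (Suc k) \<omega> then 1 else 0 :: real)" for k \<omega>
  define Ev where "Ev = {\<omega> \<in> space M. mm1_R n S E \<omega> > ereal t}"
  define B where "B = z ^ n * exp (- \<nu> * t) * exp (c * \<nu> * t)"

  define P where "P k = (\<nu> * t) ^ k * exp (- \<nu> * t) / fact k" for k
  have XSm[measurable]: "XS k \<in> borel_measurable M" for k
    unfolding XS_def by measurable
  have XEm[measurable]: "XE k \<in> borel_measurable M" for k
    unfolding XE_def by measurable
  have pos: "AE \<omega> in M. \<forall>i. 0 < E i \<omega>"
    unfolding AE_all_countable
  proof
    fix i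
    have N: "{\<omega> \<in> space M. \<not> 0 < E i \<omega>} = {\<omega> \<in> space M. E i \<omega> \<le> 0}" by auto
    have "measure M {\<omega> \<in> space M. E i \<omega> \<le> 0} = 0"
      using exponential_distributedD_le[OF Edist[of i], of 0] lam lmu by simp
    then have "emeasure M {\<omega> \<in> space M. E i \<omega> \<le> 0} = 0"
      by (simp add: emeasure_eq_measure)
    then show "AE \<omega> in M. 0 < E i \<omega>"
      by (subst AE_iff_measurable[OF _ N]) auto
  qed
  have cdf: "measure M {\<omega> \<in> space M. T k \<omega> \<le> t} = 1 - (\<Sum>j<k. P j)" for k
  proof (cases k)
    case 0
    then have "{\<omega> \<in> space M. T k \<omega> \<le> t} = space M"
      using t by (auto simp: T_def mm1_jump_time_def)
    then show ?thesis using 0 by (simp add: prob_space)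
  next
    case (Suc m)
    have d: "distributed M lborel (\<lambda>x. \<Sum>i\<in>{..<Suc m}. E i x) (erlang_density (card {..<Suc m} - 1) \<nu>)"
      by (rule exponential_distributed_sum[OF _ _ nu]) 
         (auto simp: \<nu>_def intro: Edist indep_vars_subset[OF Eind])
    have "measure M {\<omega> \<in> space M. T k \<omega> \<le> t} = erlang_CDF m \<nu> t"
      using erlang_distributed_le[OF d[simplified] nu t] Suc by (simp add: T_def mm1_jump_time_def)
    also have "\<dots> = 1 - (\<Sum>j<k. P j)"
      using t Suc by (simp add: erlang_CDF_def P_def lessThan_Suc_atMost)
    finally show ?thesis .
  qed
  have Psums: "P sums 1"
  proof -
    have e: "(\<lambda>k. (\<nu> * t) ^ k / fact k) sums exp (\<nu> * t)"
      using exp_converges[of "\<nu> * t"] by (simp add: divide_inverse mult.commute)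
    have "(\<lambda>k. exp (- \<nu> * t) * ((\<nu> * t) ^ k / fact k)) sums (exp (- \<nu> * t) * exp (\<nu> * t))"
      by (rule sums_mult[OF e])
    moreover have "exp (- \<nu> * t) * exp (\<nu> * t) = 1" by (simp add: exp_minus field_simps)
    ultimately show ?thesis by (simp add: P_def[abs_def] mult.commute)
  qed
  have notH: "AE \<omega> in M. \<exists>k. t < T k \<omega>"
  proof -
    define H where "H = {\<omega> \<in> space M. \<forall>k. T k \<omega> \<le> t}"
    have Hm: "H \<in> sets M" unfolding H_def by measurable
    have lim: "(\<lambda>k. 1 - (\<Sum>j<k. P j)) \<longlonglongrightarrow> 0"
      using Psums unfolding sums_def by (auto intro: tendsto_eq_intros)
    have le: "measure M H \<le> 1 - (\<Sum>j<k. P j)" for k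
    proof -
      have "measure M H \<le> measure M {\<omega> \<in> space M. T k \<omega> \<le> t}"
        by (rule finite_measure_mono) (auto simp: H_def)
      then show ?thesis using cdf[of k] by simp
    qed
    have "measure M H \<le> 0"
      by (rule LIMSEQ_le_const[OF lim]) (use le in auto)
    then have "emeasure M H = 0" by (simp add: emeasure_eq_measure measure_le_0_iff)
    moreover have "{\<omega> \<in> space M. \<not> (\<exists>k. t < T k \<omega>)} = H" by (auto simp: H_def not_less)
    ultimately show ?thesis by (subst AE_iff_measurable[OF Hm]) auto
  qed
  have pt: "indicator Ev \<omega> \<le> (\<Sum>k. ennreal (XE k \<omega> * XS k \<omega>))"
    if p: "\<forall>i. 0 < E i \<omega>" and h: "\<exists>k. t < T k \<omega>" for \<omega>
  proof (cases "\<omega> \<in> Ev")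
    case False
    then show ?thesis by simp
  next
    case True
    then have R: "mm1_R n S E \<omega> > ereal t" by (simp add: Ev_def)
    obtain k0 where k0: "t < T k0 \<omega>" using h by blast
    have T0: "T 0 \<omega> = 0" by (simp add: T_def mm1_jump_time_def)
    have "k0 \<noteq> 0" using k0 t T0 by (metis not_less)
    then have ex: "\<exists>k. t < T (Suc k) \<omega>" using k0 by (metis not0_implies_Suc)
    define k where "k = (LEAST k. t < T (Suc k) \<omega>)"
    have k1: "t < T (Suc k) \<omega>" unfolding k_def by (rule LeastI_ex[OF ex])
    have k2: "T k \<omega> \<le> t"
    proof (cases k)
      case 0 then show ?thesis using T0 t by simp
    next
      case (Suc j)
      have "j < k" using Suc by simp
      then have "\<not> t < T (Suc j) \<omega>" unfolding k_def by (rule not_less_Least)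
      then show ?thesis using Suc by simp
    qed
    have al: "\<forall>j\<le>k. mm1_chain n S j \<omega> \<noteq> 0"
      by (rule alive[of E \<omega>, OF p]) (use k2 R in \<open>auto simp: T_def\<close>)
    have "XS k \<omega> = z ^ mm1_chain n S k \<omega>"
      unfolding XS_def using chain_pow[of z k n S \<omega>] al z1 by simp
    also have "\<dots> \<ge> 1" using z1 by simp
    finally have ge: "1 \<le> XE k \<omega> * XS k \<omega>" using k1 k2 by (simp add: XE_def)
    have "indicator Ev \<omega> = (1::ennreal)" using True by simp
    also have "\<dots> \<le> ennreal (XE k \<omega> * XS k \<omega>)" using ge by simp
    also have "\<dots> \<le> (\<Sum>k. ennreal (XE k \<omega> * XS k \<omega>))"
      using sum_le_suminf[of "\<lambda>k. ennreal (XE k \<omega> * XS k \<omega>)" "{k}"] by simp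
    finally show ?thesis .
  qed
  have pw: "AE \<omega> in M. indicator Ev \<omega> \<le> (\<Sum>k. ennreal (XE k \<omega> * XS k \<omega>))"
    using pos notH by eventually_elim (rule pt)
  have z0: "0 < z" using z1 by simp
  have XE_int: "(\<integral>\<^sup>+\<omega>. ennreal (XE k \<omega>) \<partial>M) = ennreal (P k)" for k
  proof -
    define A where "A = {\<omega> \<in> space M. T k \<omega> \<le> t \<and> t < T (Suc k) \<omega>}"
    define L where "L = {\<omega> \<in> space M. T (Suc k) \<omega> \<le> t}"
    define K where "K = {\<omega> \<in> space M. T k \<omega> \<le> t}"
    have Am[measurable]: "A \<in> sets M"
      unfolding A_def using Tmeas by (intro sets.sets_Collect_conj; measurable)
    have Lm[measurable]: "L \<in> sets M"
      unfolding L_def by measurable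
    have Km[measurable]: "K \<in> sets M"
      unfolding K_def by measurable
    have "(\<integral>\<^sup>+\<omega>. ennreal (XE k \<omega>) \<partial>M) = (\<integral>\<^sup>+\<omega>. indicator A \<omega> \<partial>M)"
      by (intro nn_integral_cong) (auto simp: XE_def A_def indicator_def)
    also have "\<dots> = emeasure M A" by simp
    also have "\<dots> = ennreal (measure M A)" by (simp add: emeasure_eq_measure)
    also have "measure M A = P k"
    proof -
      have "measure M (A \<union> L) = measure M A + measure M L"
        by (rule finite_measure_Union) (auto simp: A_def L_def)
      also have "measure M (A \<union> L) = measure M K"
      proof (rule finite_measure_eq_AE)
        show "AE x in M. (x \<in> A \<union> L) = (x \<in> K)"
          using pos
        proof eventually_elim
          case (elim x)
          have "T (Suc k) x = T k x + E k x" by (simp add: T_def mm1_jump_time_def)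
          then have "T k x \<le> T (Suc k) x" using elim[rule_format, of k] by simp
          then show ?case by (auto simp: A_def L_def K_def)
        qed
      qed auto
      finally have "measure M A = measure M K - measure M L" by simp
      also have "\<dots> = P k" using cdf[of k] cdf[of "Suc k"] unfolding K_def L_def by simp
      finally show ?thesis .
    qed
    finally show ?thesis .
  qed
  have f_int: "(\<integral>\<^sup>+\<omega>. ennreal (if S i \<omega> then z else 1 / z) \<partial>M) = ennreal c" for i
  proof -
    define B1 where "B1 = {\<omega> \<in> space M. S i \<omega>}"
    have [measurable]: "B1 \<in> sets M" unfolding B1_def by measurable
    have "(\<integral>\<^sup>+\<omega>. ennreal (if S i \<omega> then z else 1 / z) \<partial>M)
        = (\<integral>\<^sup>+\<omega>. ennreal z * indicator B1 \<omega> + ennreal (1 / z) * indicator (space M - B1) \<omega> \<partial>M)"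
      by (intro nn_integral_cong) (auto simp: B1_def indicator_def)
    also have "\<dots> = ennreal z * emeasure M B1 + ennreal (1 / z) * emeasure M (space M - B1)"
      by (subst nn_integral_add) (auto simp: nn_integral_cmult_indicator)
    also have "\<dots> = ennreal z * ennreal (lam / \<nu>) + ennreal (1 / z) * ennreal (1 - lam / \<nu>)"
    proof -
      have "measure M (space M - B1) = 1 - lam / \<nu>"
        using prob_compl[of B1] Sprob[of i] by (simp add: B1_def \<nu>_def)
      then show ?thesis using Sprob[of i] by (simp add: emeasure_eq_measure B1_def \<nu>_def)
    qed
    also have "\<dots> = ennreal (z * (lam / \<nu>) + (1 / z) * (1 - lam / \<nu>))"
    proof -
      have a: "0 \<le> lam / \<nu>" "0 \<le> 1 - lam / \<nu>" using nu lam lmu by (auto simp: \<nu>_def field_simps)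
      have "0 \<le> z * lam / \<nu>" using z0 lam nu by simp
      then show ?thesis using z0 a
        by (subst ennreal_plus; (subst ennreal_mult)?; (subst ennreal_mult)?) (use z0 a nu in \<open>auto simp: mult_nonneg_nonneg\<close>)
    qed
    also have "z * (lam / \<nu>) + (1 / z) * (1 - lam / \<nu>) = c"
    proof -
      have sl: "sqrt lam * sqrt lam = lam" using lam by simp
      have sm: "sqrt mu * sqrt mu = mu" using lam lmu by simp
      have "1 - lam / \<nu> = mu / \<nu>" using nu by (simp add: \<nu>_def field_simps)
      moreover have "sqrt lam > 0" "sqrt mu > 0" using lam lmu by auto
      ultimately have p: "sqrt lam > 0" "sqrt mu > 0" "1 - lam / \<nu> = mu / \<nu>" by auto
      have e1: "z * lam = sqrt lam * sqrt mu"
        unfolding z_def using p by (subst sl[symmetric]) (simp add: field_simps)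
      have e2: "(1 / z) * mu = sqrt lam * sqrt mu"
        unfolding z_def using p by (subst sm[symmetric]) (simp add: field_simps)
      have "z * (lam / \<nu>) + (1 / z) * (1 - lam / \<nu>) = (z * lam + (1 / z) * mu) / \<nu>"
        unfolding p(3) by (simp only: add_divide_distrib times_divide_eq_right)
      also have "\<dots> = c" unfolding e1 e2 c_def by simp
      finally show ?thesis .
    qed
    finally show ?thesis .
  qed
  have XS_int: "(\<integral>\<^sup>+\<omega>. ennreal (XS k \<omega>) \<partial>M) = ennreal (z ^ n * c ^ k)" for k
  proof -
    define f where "f i \<omega> = ennreal (if S i \<omega> then z else 1 / z)" for i \<omega>
    have fm[measurable]: "f i \<in> borel_measurable M" for i unfolding f_def by measurable
    have indf: "indep_vars (\<lambda>_. borel) f {..<k}"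
      unfolding f_def
      by (rule indep_vars_compose2[OF indep_vars_subset[OF Sind subset_UNIV],
            where Y="\<lambda>_ b. ennreal (if b then z else 1 / z)"]) simp
    have "(\<integral>\<^sup>+\<omega>. ennreal (XS k \<omega>) \<partial>M) = (\<integral>\<^sup>+\<omega>. ennreal (z ^ n) * (\<Prod>i<k. f i \<omega>) \<partial>M)"
      using z0 by (intro nn_integral_cong)
        (simp add: XS_def f_def ennreal_mult prod_ennreal prod_nonneg)
    also have "\<dots> = ennreal (z ^ n) * (\<integral>\<^sup>+\<omega>. (\<Prod>i<k. f i \<omega>) \<partial>M)"
      by (rule nn_integral_cmult) measurable
    also have "(\<integral>\<^sup>+\<omega>. (\<Prod>i<k. f i \<omega>) \<partial>M) = (\<Prod>i<k. \<integral>\<^sup>+\<omega>. f i \<omega> \<partial>M)"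
      using indf by (intro indep_vars_nn_integral) auto
    also have "\<dots> = (\<Prod>i<k. ennreal c)" unfolding f_def using f_int by simp
    also have "\<dots> = ennreal (c ^ k)" using c0 by (simp add: ennreal_power)
    finally show ?thesis using z0 c0 by (simp add: ennreal_mult)
  qed
  define GS where "GS = (\<Union>i. {S i -` A \<inter> space M | A. A \<in> sets (count_space (UNIV::bool set))})"
  define GE where "GE = (\<Union>i. {E i -` A \<inter> space M | A. A \<in> sets (borel::real measure)})"
  have GSp: "GS \<subseteq> Pow (space M)" and GEp: "GE \<subseteq> Pow (space M)" by (auto simp: GS_def GE_def)
  have SMS[measurable]: "S i \<in> measurable (sigma (space M) GS) (count_space UNIV)" for i
    unfolding GS_def by (rule sigma_gen_measurable[OF Smeas])
  have EME[measurable]: "E i \<in> borel_measurable (sigma (space M) GE)" for i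
    unfolding GE_def by (rule sigma_gen_measurable[OF Emeas])
  have ind: "indep_vars (\<lambda>_. borel) (case_bool (XS k) (XE k)) UNIV" for k
    unfolding indep_vars_def2
  proof
    show "\<forall>i\<in>UNIV. random_variable borel (case_bool (XS k) (XE k) i)"
      by (auto split: bool.split)
    have XSm': "XS k \<in> borel_measurable (sigma (space M) GS)" unfolding XS_def by measurable
    have XEm': "XE k \<in> borel_measurable (sigma (space M) GE)" unfolding XE_def T_def by measurable
    show "indep_sets (\<lambda>i. {case_bool (XS k) (XE k) i -` A \<inter> space M |A. A \<in> sets borel}) UNIV"
    proof (rule indep_sets_mono_sets[OF indSE[unfolded indep_set_def]])
      fix i :: bool
      show "{case_bool (XS k) (XE k) i -` A \<inter> space M |A. A \<in> sets borel}
          \<subseteq> case_bool (sigma_sets (space M) (\<Union>i. {S i -` A \<inter> space M |A. A \<in> sets (count_space UNIV)}))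
                      (sigma_sets (space M) (\<Union>i. {E i -` A \<inter> space M |A. A \<in> sets borel})) i"
      proof (cases i)
        case True
        then show ?thesis using sigma_gen_sub[OF XSm' GSp] by (simp add: GS_def)
      next
        case False
        then show ?thesis using sigma_gen_sub[OF XEm' GEp] by (simp add: GE_def)
      qed
    qed
  qed
  have Pnn: "0 \<le> P k" for k using nu t by (simp add: P_def)
  have ints: "(\<integral>\<^sup>+\<omega>. ennreal (XE k \<omega> * XS k \<omega>) \<partial>M) = ennreal (P k * (z ^ n * c ^ k))" for k
  proof -
    have XSnn: "0 \<le> XS k \<omega>" for \<omega> using z0 unfolding XS_def by (intro mult_nonneg_nonneg prod_nonneg) auto
    have XEnn: "0 \<le> XE k \<omega>" for \<omega> by (simp add: XE_def)
    have ind': "indep_vars (\<lambda>_. borel) (\<lambda>i \<omega>. ennreal (case_bool (XS k) (XE k) i \<omega>)) UNIV"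
      by (rule indep_vars_compose2[OF ind[of k], where Y="\<lambda>_ x. ennreal x"]) simp
    have "(\<integral>\<^sup>+\<omega>. ennreal (XE k \<omega> * XS k \<omega>) \<partial>M)
       = (\<integral>\<^sup>+\<omega>. (\<Prod>i\<in>UNIV. ennreal (case_bool (XS k) (XE k) i \<omega>)) \<partial>M)"
      using XSnn XEnn by (simp add: UNIV_bool ennreal_mult mult.commute)
    also have "\<dots> = (\<Prod>i\<in>UNIV. \<integral>\<^sup>+\<omega>. ennreal (case_bool (XS k) (XE k) i \<omega>) \<partial>M)"
      using ind' by (intro indep_vars_nn_integral) auto
    also have "\<dots> = ennreal (P k) * ennreal (z ^ n * c ^ k)"
      by (simp add: UNIV_bool XS_int XE_int)
    also have "\<dots> = ennreal (P k * (z ^ n * c ^ k))"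
      using z0 c0 Pnn by (simp add: ennreal_mult)
    finally show ?thesis .
  qed
  have sumB: "(\<Sum>k. ennreal (P k * (z ^ n * c ^ k))) = ennreal B"
  proof -
    have e: "(\<lambda>k. (c * \<nu> * t) ^ k / fact k) sums exp (c * \<nu> * t)"
      using exp_converges[of "c * \<nu> * t"] by (simp add: divide_inverse mult.commute)
    have eq: "P k * (z ^ n * c ^ k) = (z ^ n * exp (- \<nu> * t)) * ((c * \<nu> * t) ^ k / fact k)" for k
      by (simp add: P_def power_mult_distrib field_simps)
    have s: "(\<lambda>k. P k * (z ^ n * c ^ k)) sums B"
      unfolding eq B_def by (rule sums_mult[OF e])
    have nn: "0 \<le> P k * (z ^ n * c ^ k)" for k
      using z1 c0 t nu by (simp add: P_def)
    show ?thesis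
      using suminf_ennreal2[OF nn sums_summable[OF s]] sums_unique[OF s] by simp
  qed
  have main: "emeasure M Ev \<le> ennreal B" if Evm: "Ev \<in> sets M"
  proof -
    have "emeasure M Ev = (\<integral>\<^sup>+\<omega>. indicator Ev \<omega> \<partial>M)"
      using Evm by simp
    also have "\<dots> \<le> (\<integral>\<^sup>+\<omega>. (\<Sum>k. ennreal (XE k \<omega> * XS k \<omega>)) \<partial>M)"
      by (rule nn_integral_mono_AE[OF pw])
    also have "\<dots> = (\<Sum>k. \<integral>\<^sup>+\<omega>. ennreal (XE k \<omega> * XS k \<omega>) \<partial>M)"
      by (rule nn_integral_suminf) measurable
    also have "\<dots> = ennreal B" using ints sumB by simp
    finally show ?thesis .
  qed
  have B0: "0 \<le> B" using z1 by (simp add: B_def)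
  have "measure M Ev \<le> B"
  proof (cases "Ev \<in> sets M")
    case True
    then show ?thesis using main[OF True] B0 by (simp add: emeasure_eq_measure)
  next
    case False
    then show ?thesis using B0 by (simp add: measure_notin_sets)
  qed
  also have "B \<le> (lam / mu) powr (- real n / 2)
            * exp (- (real n * b) * (lam + mu - sqrt (1 / b\<^sup>2 + 4 * lam * mu)))"
  proof -
    have zn: "z ^ n = (lam / mu) powr (- real n / 2)"
    proof -
      have "(lam / mu) powr (- real n / 2) = ((lam / mu) powr (- 1 / 2)) powr real n"
        by (simp add: powr_powr)
      also have "(lam / mu) powr (- 1 / 2) = z"
      proof -
        have "(lam / mu) powr (- 1 / 2) = inverse ((lam / mu) powr (1 / 2))"
          by (simp add: powr_minus [symmetric])
        also have "\<dots> = inverse (sqrt (lam / mu))" using lam lmu by (simp add: powr_half_sqrt)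
        also have "\<dots> = z" by (simp add: z_def real_sqrt_divide)
        finally show ?thesis .
      qed
      also have "z powr real n = z ^ n" using z1 by (simp add: powr_realpow)
      finally show ?thesis by simp
    qed
    have cn: "c * \<nu> = sqrt (4 * lam * mu)" using nu lam lmu
      by (simp add: c_def real_sqrt_mult)
    have sq: "sqrt (4 * lam * mu) \<le> sqrt (1 / b\<^sup>2 + 4 * lam * mu)"
      by (rule real_sqrt_le_mono) simp
    have "exp (- \<nu> * t) * exp (c * \<nu> * t) = exp (- t * (lam + mu - sqrt (4 * lam * mu)))"
    proof -
      have "- \<nu> * t + c * \<nu> * t = - t * (lam + mu - sqrt (4 * lam * mu))"
        using cn by (simp add: \<nu>_def algebra_simps)
      then show ?thesis by (simp add: exp_add[symmetric])
    qed
    also have "\<dots> \<le> exp (- t * (lam + mu - sqrt (1 / b\<^sup>2 + 4 * lam * mu)))"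
      using sq t by (intro exp_mono) (simp add: mult_left_mono)
    finally have "exp (- \<nu> * t) * exp (c * \<nu> * t) \<le> exp (- t * (lam + mu - sqrt (1 / b\<^sup>2 + 4 * lam * mu)))" .
    then have "z ^ n * (exp (- \<nu> * t) * exp (c * \<nu> * t)) \<le> z ^ n * exp (- t * (lam + mu - sqrt (1 / b\<^sup>2 + 4 * lam * mu)))"
      using z1 by (intro mult_left_mono) auto
    then show ?thesis by (simp add: B_def zn t_def mult.assoc)
  qed
  finally show ?thesis unfolding Ev_def t_def .
qed

end
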